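(* Assume (A1) and (A3) hold. Then there exists a constant $C_0>0$ such that $L(\theta)-L(\theta_0)\ge C_0\,\pi_{\mathbb P}^2(\theta,\theta_0)$ for every $\theta=(\alpha,\beta)\in\mathbb R\times L^2([0,1])$.
   Context: Model: $y\in\{0,1\}$ and $X\in L^2([0,1])$, with $y\mid X\sim\mathrm{Bernoulli}(F(\alpha_0+\langle X,\beta_0\rangle))$, where $F(t)=e^t/(1+e^t)$, $\langle u,v\rangle=\int_0^1uv$, and $\theta_0=(\alpha_0,\beta_0)$. $w$ is a non-negative bounded weight function. Loss: $d(y,t)=-y\log F(t)-(1-y)\log(1-F(t))$, $\psi=\rho'$, $G(t)=\int_0^t\psi(-\log u)\,du$, and $$\phi(y,t)=\rho(d(y,t))+G(F(t))+G(1-F(t)).$$ Objective and discrepancy: $$L(\theta)=\mathbb E\big(\phi(y,\alpha+\langle X,\beta\rangle)w(X)\big),$$ $$\pi_{\mathbb P}^2(\theta,\theta_0)=\mathbb E\big(w(X)[F(\alpha+\langle X,\beta\rangle)-F(\alpha_0+\langle X,\beta_0\rangle)]^2\big).$$ Assumptions: (A1) $\rho:[0,\infty)\to\mathbb R$ is bounded and continuously differentiable, with bounded derivative $\psi$, and $\rho(0)=0$. (A3) $\psi\ge0$, and there exist $a\ge\log2$ and $A_0>0$ with $\psi(t)>A_0$ for $0<t<a$. *)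

theory Defs
  imports "HOL-Probability.Probability"
begin

definition logF :: "real \<Rightarrow> real" where
  "logF t = exp t / (1 + exp t)"

definition dev :: "real \<Rightarrow> real \<Rightarrow> real" where
  "dev y t = - y * ln (logF t) - (1 - y) * ln (1 - logF t)"

definition Gfun :: "(real \<Rightarrow> real) \<Rightarrow> real \<Rightarrow> real" where
  "Gfun \<psi> t = (LBINT u=0..t. \<psi> (- ln u))"

definition phi :: "(real \<Rightarrow> real) \<Rightarrow> (real \<Rightarrow> real) \<Rightarrow> real \<Rightarrow> real \<Rightarrow> real" where
  "phi \<rho> \<psi> y t = \<rho> (dev y t) + Gfun \<psi> (logF t) + Gfun \<psi> (1 - logF t)"

text \<open>Membership in L^2([0,1]) (functions as representatives).\<close>
definition sq_int :: "(real \<Rightarrow> real) \<Rightarrow> bool" where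
  "sq_int f \<longleftrightarrow> set_borel_measurable lborel {0..1} f
      \<and> set_integrable lborel {0..1} (\<lambda>s. (f s)^2)"

definition ip :: "(real \<Rightarrow> real) \<Rightarrow> (real \<Rightarrow> real) \<Rightarrow> real" where
  "ip u v = (LINT s:{0..1}|lborel. u s * v s)"

text \<open>sigma-algebra generated by the random element X of L^2([0,1]) (generated by
  the continuous linear functionals, which generate the Borel sets of the separable
  Hilbert space L^2).\<close>
definition sigmaX :: "'w measure \<Rightarrow> ('w \<Rightarrow> real \<Rightarrow> real) \<Rightarrow> 'w measure" where
  "sigmaX M X = sigma (space M)
     (\<Union>\<beta>\<in>{\<beta>. sq_int \<beta>}. {(\<lambda>\<omega>. ip (X \<omega>) \<beta>) -` B \<inter> space M | B. B \<in> sets borel})"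

definition Lobj :: "(real \<Rightarrow> real) \<Rightarrow> (real \<Rightarrow> real) \<Rightarrow> 'w measure \<Rightarrow> ((real \<Rightarrow> real) \<Rightarrow> real)
    \<Rightarrow> ('w \<Rightarrow> real \<Rightarrow> real) \<Rightarrow> ('w \<Rightarrow> real) \<Rightarrow> real \<Rightarrow> (real \<Rightarrow> real) \<Rightarrow> real" where
  "Lobj \<rho> \<psi> M w X y \<alpha> \<beta> = (\<integral>\<omega>. phi \<rho> \<psi> (y \<omega>) (\<alpha> + ip (X \<omega>) \<beta>) * w (X \<omega>) \<partial>M)"

definition piP2 :: "'w measure \<Rightarrow> ((real \<Rightarrow> real) \<Rightarrow> real) \<Rightarrow> ('w \<Rightarrow> real \<Rightarrow> real)
    \<Rightarrow> real \<Rightarrow> (real \<Rightarrow> real) \<Rightarrow> real \<Rightarrow> (real \<Rightarrow> real) \<Rightarrow> real" where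
  "piP2 M w X \<alpha> \<beta> \<alpha>0 \<beta>0 =
     (\<integral>\<omega>. w (X \<omega>) * (logF (\<alpha> + ip (X \<omega>) \<beta>) - logF (\<alpha>0 + ip (X \<omega>) \<beta>0))^2 \<partial>M)"

end

theory Submission
  imports Defs
begin


lemma G_int:
  fixes \<psi> :: "real \<Rightarrow> real"
  assumes cont: "continuous_on {0..} \<psi>" and nn: "\<forall>t\<ge>0. 0 \<le> \<psi> t" and bd: "\<forall>t\<ge>0. \<psi> t \<le> B"
  shows "set_integrable lborel {0<..<1} (\<lambda>u. \<psi> (- ln u))"
proof -
  have c: "continuous_on {0<..<(1::real)} (\<lambda>u. \<psi> (- ln u))"
  proof (rule continuous_on_compose2[OF cont])
    show "continuous_on {0<..<(1::real)} (\<lambda>u. - ln u)"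
      by (intro continuous_intros) auto
    show "(\<lambda>u. - ln u) ` {0<..<(1::real)} \<subseteq> {0..}" by auto
  qed
  have m: "(\<lambda>x. indicator {0<..<(1::real)} x *\<^sub>R \<psi> (- ln x)) \<in> borel_measurable lborel"
    using borel_measurable_continuous_on_indicator[OF _ c] by simp
  have bnd: "norm (indicator {0<..<(1::real)} x *\<^sub>R \<psi> (- ln x)) \<le> B" if "x \<in> {0<..<1}" for x
  proof -
    have "0 \<le> - ln x" using that by simp
    then have "0 \<le> \<psi> (- ln x)" "\<psi> (- ln x) \<le> B" using nn bd by auto
    then show ?thesis using that by simp
  qed
  show ?thesis unfolding set_integrable_def
  proof (rule integrableI_bounded_set[where A="{0<..<1}" and B=B])
    show "AE x in lborel. x \<in> {0<..<1} \<longrightarrow> norm (indicator {0<..<(1::real)} x *\<^sub>R \<psi> (- ln x)) \<le> B"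
      using bnd by (intro AE_I2) blast
    show "AE x in lborel. x \<notin> {0<..<1} \<longrightarrow> indicator {0<..<(1::real)} x *\<^sub>R \<psi> (- ln x) = 0"
      by (intro AE_I2) simp
  qed (use m in simp_all)
qed

lemma G_bound:
  fixes \<psi> :: "real \<Rightarrow> real"
  assumes cont: "continuous_on {0..} \<psi>" and nn: "\<forall>t\<ge>0. 0 \<le> \<psi> t" and bd: "\<forall>t\<ge>0. \<psi> t \<le> B"
    and s: "0 \<le> s" "s \<le> 1"
  shows "0 \<le> Gfun \<psi> s \<and> Gfun \<psi> s \<le> B"
proof -
  have I: "set_integrable lborel {0<..<1} (\<lambda>u. \<psi> (- ln u))" by (rule G_int[OF assms(1-3)])
  have sub: "{0<..<s} \<subseteq> {0<..<(1::real)}" using s by auto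
  have I2: "set_integrable lborel {0<..<s} (\<lambda>u. \<psi> (- ln u))"
    by (rule set_integrable_subset[OF I _ sub]) simp
  have eq: "Gfun \<psi> s = (LINT u:{0<..<s}|lborel. \<psi> (- ln u))"
    unfolding Gfun_def using interval_integral_Ioo[of "ereal 0" "ereal s" "\<lambda>u. \<psi> (- ln u)"] s
    by (simp add: zero_ereal_def)
  have "0 \<le> \<psi> 0" "\<psi> 0 \<le> B" using nn bd by auto
  then have B0: "0 \<le> B" by linarith
  have pt: "0 \<le> \<psi> (- ln u) \<and> \<psi> (- ln u) \<le> B" if u: "u \<in> {0<..<s}" for u
  proof -
    have "ln u \<le> 0" using u s by simp
    then have "0 \<le> - ln u" by linarith
    then show ?thesis using nn bd by blast
  qed
  have CI: "set_integrable lborel {0<..<s} (\<lambda>_. B)"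
    unfolding set_integrable_def
    by (rule integrableI_bounded_set_indicator[where B="\<bar>B\<bar>"]) (use s in simp_all)
  have "(LINT u:{0<..<s}|lborel. \<psi> (- ln u)) \<le> (LINT u:{0<..<s}|lborel. B)"
    by (rule set_integral_mono[OF I2 CI]) (use pt in blast)
  also have "(LINT u:{0<..<s}|lborel. B) = measure lborel {0<..<s} *\<^sub>R B"
    by (rule set_integral_const) (use s in simp_all)
  also have "\<dots> = s * B" using s by simp
  also have "\<dots> \<le> B" using s B0 by (simp add: mult_left_le_one_le)
  finally have up: "(LINT u:{0<..<s}|lborel. \<psi> (- ln u)) \<le> B" .
  have "0 \<le> (LINT u:{0<..<s}|lborel. \<psi> (- ln u))"
    unfolding set_lebesgue_integral_def
  proof (rule Bochner_Integration.integral_nonneg)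
    fix x show "0 \<le> indicator {0<..<s} x *\<^sub>R \<psi> (- ln x)"
      using pt[of x] by (cases "x \<in> {0<..<s}") auto
  qed
  with up eq show ?thesis by simp
qed

lemma G_deriv:
  fixes \<psi> :: "real \<Rightarrow> real"
  assumes cont: "continuous_on {0..} \<psi>" and nn: "\<forall>t\<ge>0. 0 \<le> \<psi> t" and bd: "\<forall>t\<ge>0. \<psi> t \<le> B"
    and x: "0 < x" "x < 1"
  shows "(Gfun \<psi> has_real_derivative \<psi> (- ln x)) (at x)"
proof -
  have I: "set_integrable lborel {0<..<1} (\<lambda>u. \<psi> (- ln u))" by (rule G_int[OF assms(1-3)])
  define a where "a = min (x/2) (1/4)"
  define b where "b = max ((1+x)/2) (3/4)"
  have ab: "0 < a" "a < x" "x < b" "b < 1" "a \<le> 1/2" "1/2 \<le> b" using x by (auto simp: a_def b_def max_def min_def)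
  have c: "continuous_on {a..b} (\<lambda>u. \<psi> (- ln u))"
  proof (rule continuous_on_compose2[OF cont])
    show "continuous_on {a..b} (\<lambda>u. - ln u)"
      by (intro continuous_intros) (use ab in auto)
    show "(\<lambda>u. - ln u) ` {a..b} \<subseteq> {0..}" using ab by auto
  qed
  have eq: "Gfun \<psi> u = Gfun \<psi> (1/2) + (LBINT y=ereal (1/2)..ereal u. \<psi> (- ln y))" if u: "u \<in> {a..b}" for u
  proof -
    have u0: "0 < u" "u < 1" using u ab by auto
    have mn: "min (ereal 0) (min (ereal (1/2)) (ereal u)) = ereal 0" using u0 by (simp add: min_def)
    have mx: "max (ereal 0) (max (ereal (1/2)) (ereal u)) = ereal (max (1/2) u)" using u0
      by (simp add: max_def)
    have sub: "{0<..<max (1/2) u} \<subseteq> {0<..<(1::real)}" using u0 by auto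
    have si: "set_integrable lborel {0<..<max (1/2) u} (\<lambda>u. \<psi> (- ln u))"
      by (rule set_integrable_subset[OF I _ sub]) simp
    have ei: "einterval (ereal 0) (ereal (max (1/2) u)) = {0<..<max (1/2) u}"
      by (cases "1/2 \<le> u") (auto simp: einterval_def max_def)
    have "interval_lebesgue_integrable lborel (ereal 0) (ereal (max (1/2) u)) (\<lambda>u. \<psi> (- ln u))"
      unfolding interval_lebesgue_integrable_def using si ei by (auto simp: le_max_iff_disj)
    then have "interval_lebesgue_integrable lborel (min (ereal 0) (min (ereal (1/2)) (ereal u))) (max (ereal 0) (max (ereal (1/2)) (ereal u))) (\<lambda>u. \<psi> (- ln u))"
      by (simp only: mn mx)
    from interval_integral_sum[OF this] have
      "(LBINT y=ereal 0..ereal (1/2). \<psi> (- ln y)) + (LBINT y=ereal (1/2)..ereal u. \<psi> (- ln y)) = (LBINT y=ereal 0..ereal u. \<psi> (- ln y))" .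
    moreover have "Gfun \<psi> (1/2) = (LBINT y=ereal 0..ereal (1/2). \<psi> (- ln y))" "Gfun \<psi> u = (LBINT y=ereal 0..ereal u. \<psi> (- ln y))"
      unfolding Gfun_def zero_ereal_def by simp_all
    ultimately show ?thesis by simp
  qed
  have "((\<lambda>u. LBINT y=ereal (1/2)..ereal u. \<psi> (- ln y)) has_vector_derivative \<psi> (- ln x)) (at x within {a..b})"
    by (rule interval_integral_FTC2[OF _ _ c]) (use ab in auto)
  moreover have e: "at x within {a..b} = at x" by (rule at_within_Icc_at) (use ab in auto)
  ultimately have "((\<lambda>u. LBINT y=ereal (1/2)..ereal u. \<psi> (- ln y)) has_vector_derivative \<psi> (- ln x)) (at x)"
    by (simp only:)
  then have D: "((\<lambda>u. LBINT y=ereal (1/2)..ereal u. \<psi> (- ln y)) has_real_derivative \<psi> (- ln x)) (at x)"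
    by (simp add: has_real_derivative_iff_has_vector_derivative)
  have "((\<lambda>u. Gfun \<psi> (1/2) + (LBINT y=ereal (1/2)..ereal u. \<psi> (- ln y))) has_real_derivative \<psi> (- ln x)) (at x)"
    using DERIV_add[OF DERIV_const[of "Gfun \<psi> (1/2)"] D] by (simp only: add_0_left)
  then show ?thesis
  proof (rule has_field_derivative_transform_within_open[where S="{a<..<b}"])
    show "open {a<..<b}" by simp
    show "x \<in> {a<..<b}" using ab by simp
    show "\<And>u. u \<in> {a<..<b} \<Longrightarrow> Gfun \<psi> (1/2) + (LBINT y=ereal (1/2)..ereal u. \<psi> (- ln y)) = Gfun \<psi> u"
      using eq by auto
  qed
qed



lemma rho_at:
  assumes A1_deriv: "\<forall>t\<ge>0. (\<rho> has_real_derivative \<psi> t) (at t within {0..})" and t: "0 < t"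
  shows "(\<rho> has_real_derivative \<psi> t) (at t)"
proof -
  have "(\<rho> has_real_derivative \<psi> t) (at t within {0<..})"
    by (rule has_field_derivative_subset[OF A1_deriv[rule_format]]) (use t in auto)
  then show ?thesis using at_within_open[of t "{0<..}"] t by simp
qed

lemma psi_ln2:
  fixes \<psi> :: "real \<Rightarrow> real"
  assumes cont: "continuous_on {0..} \<psi>" and A: "\<forall>t. 0 < t \<and> t < ln 2 \<longrightarrow> \<psi> t > A0"
  shows "A0 \<le> \<psi> (ln 2)"
proof -
  have "continuous_on {0<..} \<psi>" by (rule continuous_on_subset[OF cont]) auto
  then have "isCont \<psi> (ln 2)" using continuous_on_eq_continuous_at[of "{0<..}" \<psi>] by simp
  then have "(\<psi> \<longlongrightarrow> \<psi> (ln 2)) (at (ln 2))" by (simp add: isCont_def)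
  then have L: "(\<psi> \<longlongrightarrow> \<psi> (ln 2)) (at_left (ln 2))"
    using tendsto_mono[OF at_le[of "{..<ln 2}" UNIV]] by simp
  have "eventually (\<lambda>x. x \<in> {0<..<ln 2}) (at_left (ln (2::real)))"
    by (rule eventually_at_left_real) simp
  then have "eventually (\<lambda>x. A0 \<le> \<psi> x) (at_left (ln (2::real)))"
    by (rule eventually_mono) (use A in \<open>auto intro: less_imp_le\<close>)
  from tendsto_lowerbound[OF L this] show ?thesis by simp
qed

lemma psi_half:
  fixes \<psi> :: "real \<Rightarrow> real"
  assumes cont: "continuous_on {0..} \<psi>" and a: "a \<ge> ln 2" and A: "\<forall>t. 0 < t \<and> t < a \<longrightarrow> \<psi> t > A0"
    and u: "1/2 \<le> u" "u < 1"
  shows "A0 \<le> \<psi> (- ln u)"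
proof -
  have A': "\<forall>t. 0 < t \<and> t < ln 2 \<longrightarrow> \<psi> t > A0" using A a by auto
  have u0: "0 < u" using u by simp
  have l1: "0 < - ln u" using u u0 by simp
  have "ln (1/2) \<le> ln u" using u u0 by simp
  then have l2: "- ln u \<le> ln 2" by (simp add: ln_div)
  show ?thesis
  proof (cases "- ln u = ln 2")
    case True then show ?thesis using psi_ln2[OF cont A'] by simp
  next
    case False then show ?thesis using A' l1 l2 by (auto intro: less_imp_le)
  qed
qed

lemma K_ge:
  fixes \<psi> :: "real \<Rightarrow> real"
  assumes cont: "continuous_on {0..} \<psi>" and nn: "\<forall>t\<ge>0. 0 \<le> \<psi> t"
    and a: "a \<ge> ln 2" and A: "\<forall>t. 0 < t \<and> t < a \<longrightarrow> \<psi> t > A0" and A0: "A0 > 0"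
    and s: "0 < s" "s < 1"
  shows "A0 \<le> \<psi> (- ln s) / s + \<psi> (- ln (1 - s)) / (1 - s)"
proof -
  have n1: "0 \<le> \<psi> (- ln s) / s" using nn s by simp
  have n2: "0 \<le> \<psi> (- ln (1-s)) / (1-s)" using nn s by simp
  show ?thesis
  proof (cases "1/2 \<le> s")
    case True
    then have "A0 \<le> \<psi> (- ln s)" using psi_half[OF cont a A] s by simp
    also have "\<dots> \<le> \<psi> (- ln s) / s" using s nn divide_left_mono[of s 1 "\<psi> (- ln s)"] by simp
    finally show ?thesis using n2 by simp
  next
    case False
    then have "A0 \<le> \<psi> (- ln (1-s))" using psi_half[OF cont a A, of "1-s"] s by simp
    also have "\<dots> \<le> \<psi> (- ln (1-s)) / (1-s)" using s nn divide_left_mono[of "1-s" 1 "\<psi> (- ln (1-s))"] by simp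
    finally show ?thesis using n1 by simp
  qed
qed

lemma alg: fixes s p u v A0 :: real assumes s: "0 < s" "s < 1"
  shows "p * (u * (- (1/s))) + (1-p) * (v * (1/(1-s))) + u + v * (-1) - A0 * (s-p)
           = (s-p) * (u / s + v / (1-s) - A0)"
proof -
  have "1 - s \<noteq> 0" using s by simp
  then show ?thesis using s by (simp add: field_simps)
qed

lemma pointwise:
  fixes \<psi> \<rho> :: "real \<Rightarrow> real"
  assumes A1_deriv: "\<forall>t\<ge>0. (\<rho> has_real_derivative \<psi> t) (at t within {0..})"
    and cont: "continuous_on {0..} \<psi>" and nn: "\<forall>t\<ge>0. 0 \<le> \<psi> t" and bd: "\<forall>t\<ge>0. \<psi> t \<le> B"
    and a: "a \<ge> ln 2" and A: "\<forall>t. 0 < t \<and> t < a \<longrightarrow> \<psi> t > A0" and A0: "A0 > 0"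
    and p: "0 < p" "p < 1" and q: "0 < q" "q < 1"
  shows "A0/2 * (q-p)^2 \<le> (p * \<rho> (- ln q) + (1-p) * \<rho> (- ln (1-q)) + Gfun \<psi> q + Gfun \<psi> (1-q))
           - (p * \<rho> (- ln p) + (1-p) * \<rho> (- ln (1-p)) + Gfun \<psi> p + Gfun \<psi> (1-p))"
proof -
  define g where "g = (\<lambda>s. p * \<rho> (- ln s) + (1-p) * \<rho> (- ln (1-s)) + Gfun \<psi> s + Gfun \<psi> (1-s) - A0/2 * (s-p)^2)"
  have dg: "(g has_real_derivative (s-p) * (\<psi> (- ln s) / s + \<psi> (- ln (1-s)) / (1-s) - A0)) (at s)"
    if s: "0 < s" "s < 1" for s
  proof -
    have i1: "((\<lambda>s. - ln s) has_real_derivative - (1/s)) (at s)"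
      using DERIV_minus[OF DERIV_ln_divide[OF s(1)]] .
    have i2: "((\<lambda>s. - ln (1-s)) has_real_derivative 1/(1-s)) (at s)"
      using s by (auto intro!: derivative_eq_intros simp: field_simps)
    have i3: "((\<lambda>s. 1-s) has_real_derivative -1) (at s)"
      by (auto intro!: derivative_eq_intros)
    have D1: "((\<lambda>s. \<rho> (- ln s)) has_real_derivative \<psi> (- ln s) * (- (1/s))) (at s)"
      by (rule DERIV_chain2[OF rho_at[OF A1_deriv] i1]) (use s in simp)
    have D2: "((\<lambda>s. \<rho> (- ln (1-s))) has_real_derivative \<psi> (- ln (1-s)) * (1/(1-s))) (at s)"
      by (rule DERIV_chain2[OF rho_at[OF A1_deriv] i2]) (use s in simp)
    have D3: "(Gfun \<psi> has_real_derivative \<psi> (- ln s)) (at s)"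
      by (rule G_deriv[OF cont nn bd s])
    have D4: "((\<lambda>s. Gfun \<psi> (1-s)) has_real_derivative \<psi> (- ln (1-s)) * (-1)) (at s)"
      by (rule DERIV_chain2[OF G_deriv[OF cont nn bd] i3]) (use s in simp_all)
    have D5: "((\<lambda>s. A0/2 * (s-p)^2) has_real_derivative A0 * (s-p)) (at s)"
      by (auto intro!: derivative_eq_intros)
    have "(g has_real_derivative (p * (\<psi> (- ln s) * (- (1/s))) + (1-p) * (\<psi> (- ln (1-s)) * (1/(1-s)))
              + \<psi> (- ln s) + \<psi> (- ln (1-s)) * (-1) - A0 * (s-p))) (at s)"
      unfolding g_def by (intro DERIV_diff DERIV_add DERIV_cmult D1 D2 D3 D4 D5)
    then show ?thesis by (rule DERIV_cong[OF _ alg[OF s]])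
  qed
  have K: "0 \<le> \<psi> (- ln s) / s + \<psi> (- ln (1-s)) / (1-s) - A0" if "0 < s" "s < 1" for s
    using K_ge[OF cont nn a A A0 that] by simp
  have "g p \<le> g q"
  proof (cases "p \<le> q")
    case True
    show ?thesis
    proof (rule DERIV_nonneg_imp_nondecreasing[OF True])
      fix x assume x: "p \<le> x" "x \<le> q"
      then have x01: "0 < x" "x < 1" using p q by auto
      show "\<exists>y. DERIV g x :> y \<and> y \<ge> 0"
      proof (intro exI conjI)
        show "DERIV g x :> (x-p) * (\<psi> (- ln x) / x + \<psi> (- ln (1-x)) / (1-x) - A0)" by (rule dg[OF x01])
        show "0 \<le> (x-p) * (\<psi> (- ln x) / x + \<psi> (- ln (1-x)) / (1-x) - A0)"
          by (rule mult_nonneg_nonneg) (use K[OF x01] x in auto)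
      qed
    qed
  next
    case False
    then have qp: "q \<le> p" by simp
    show ?thesis
    proof (rule DERIV_nonpos_imp_nonincreasing[OF qp])
      fix x assume x: "q \<le> x" "x \<le> p"
      then have x01: "0 < x" "x < 1" using p q by auto
      have "(x-p) * (\<psi> (- ln x) / x + \<psi> (- ln (1-x)) / (1-x) - A0) \<le> 0"
        by (rule mult_nonpos_nonneg) (use K[OF x01] x in auto)
      then show "\<exists>y. DERIV g x :> y \<and> y \<le> 0"
        using dg[OF x01] by blast
    qed
  qed
  then show ?thesis unfolding g_def by simp
qed



lemma logF_cont: "isCont logF t"
  unfolding logF_def by (intro continuous_intros) (smt (verit) exp_gt_zero)

lemma logF_01: "0 < logF t" "logF t < 1"
  unfolding logF_def by (simp_all add: add_pos_pos)

lemma logF_meas: "logF \<in> borel_measurable borel"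
  by (rule borel_measurable_continuous_onI) (simp add: continuous_at_imp_continuous_on logF_cont)

lemma dev1: "dev 1 t = - ln (logF t)" by (simp add: dev_def)
lemma dev0: "dev 0 t = - ln (1 - logF t)" by (simp add: dev_def)

lemma phi_cont:
  fixes \<psi> \<rho> :: "real \<Rightarrow> real"
  assumes A1_deriv: "\<forall>t\<ge>0. (\<rho> has_real_derivative \<psi> t) (at t within {0..})"
    and cont: "continuous_on {0..} \<psi>" and nn: "\<forall>t\<ge>0. 0 \<le> \<psi> t" and bd: "\<forall>t\<ge>0. \<psi> t \<le> B"
    and yy: "yv = 0 \<or> yv = 1"
  shows "phi \<rho> \<psi> yv \<in> borel_measurable borel"
proof (rule borel_measurable_continuous_onI, rule continuous_at_imp_continuous_on, intro ballI)
  fix t :: real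
  have q: "0 < logF t" "logF t < 1" by (rule logF_01)+
  have r: "isCont \<rho> x" if "0 < x" for x
    using DERIV_isCont[OF rho_at[OF A1_deriv that]] .
  have g: "isCont (Gfun \<psi>) x" if "0 < x" "x < 1" for x
    using DERIV_isCont[OF G_deriv[OF cont nn bd that]] .
  have c1: "isCont (\<lambda>t. \<rho> (- ln (logF t))) t"
    by (rule isCont_o2[OF _ r]) (use q in \<open>auto intro!: continuous_intros logF_cont\<close>)
  have c0: "isCont (\<lambda>t. \<rho> (- ln (1 - logF t))) t"
    by (rule isCont_o2[OF _ r]) (use q in \<open>auto intro!: continuous_intros logF_cont\<close>)
  have c2: "isCont (\<lambda>t. Gfun \<psi> (logF t)) t"
    by (rule isCont_o2[OF logF_cont g]) (use q in auto)
  have c3: "isCont (\<lambda>t. Gfun \<psi> (1 - logF t)) t"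
    by (rule isCont_o2[OF _ g]) (use q in \<open>auto intro!: continuous_intros logF_cont\<close>)
  from yy show "isCont (phi \<rho> \<psi> yv) t"
  proof
    assume "yv = 0"
    then have "phi \<rho> \<psi> yv = (\<lambda>t. \<rho> (- ln (1 - logF t)) + Gfun \<psi> (logF t) + Gfun \<psi> (1 - logF t))"
      by (simp add: fun_eq_iff phi_def dev0)
    then show ?thesis by (simp only:) (intro continuous_add c0 c2 c3)
  next
    assume "yv = 1"
    then have "phi \<rho> \<psi> yv = (\<lambda>t. \<rho> (- ln (logF t)) + Gfun \<psi> (logF t) + Gfun \<psi> (1 - logF t))"
      by (simp add: fun_eq_iff phi_def dev1)
    then show ?thesis by (simp only:) (intro continuous_add c1 c2 c3)
  qed
qed

lemma phi_bound:
  fixes \<psi> \<rho> :: "real \<Rightarrow> real"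
  assumes cont: "continuous_on {0..} \<psi>" and nn: "\<forall>t\<ge>0. 0 \<le> \<psi> t" and bd: "\<forall>t\<ge>0. \<psi> t \<le> B"
    and rb: "\<forall>x\<ge>0. \<bar>\<rho> x\<bar> \<le> R"
    and yy: "yv = 0 \<or> yv = 1"
  shows "\<bar>phi \<rho> \<psi> yv t\<bar> \<le> R + 2 * B"
proof -
  have q: "0 < logF t" "logF t < 1" by (rule logF_01)+
  have g1: "0 \<le> Gfun \<psi> (logF t) \<and> Gfun \<psi> (logF t) \<le> B"
    by (rule G_bound[OF cont nn bd]) (use q in auto)
  have g2: "0 \<le> Gfun \<psi> (1 - logF t) \<and> Gfun \<psi> (1 - logF t) \<le> B"
    by (rule G_bound[OF cont nn bd]) (use q in auto)
  have "0 \<le> dev yv t"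
  proof -
    have "ln (logF t) \<le> 0" "ln (1 - logF t) \<le> 0" using q by simp_all
    then show ?thesis using yy unfolding dev_def by auto
  qed
  then have "\<bar>\<rho> (dev yv t)\<bar> \<le> R" using rb by simp
  then show ?thesis unfolding phi_def using g1 g2 by linarith
qed

lemma abs_prod_le: fixes a b A C :: real
  shows "\<bar>a\<bar> \<le> A \<Longrightarrow> \<bar>b\<bar> \<le> C \<Longrightarrow> \<bar>a * b\<bar> \<le> A * C"
  by (simp add: abs_mult mult_mono')

lemma int_bdd:
  fixes f :: "'a \<Rightarrow> real"
  assumes "finite_measure M" "f \<in> borel_measurable M" "\<And>x. x \<in> space M \<Longrightarrow> \<bar>f x\<bar> \<le> c"
  shows "integrable M f"
  using finite_measure.integrable_const_bound[OF assms(1), of f c] assms(2,3) by (auto intro: AE_I2)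

theorem lemmaA3:
  fixes M :: "'w measure" and X :: "'w \<Rightarrow> real \<Rightarrow> real" and y :: "'w \<Rightarrow> real"
    and w :: "(real \<Rightarrow> real) \<Rightarrow> real" and \<rho> \<psi> :: "real \<Rightarrow> real"
    and \<alpha>0 :: real and \<beta>0 :: "real \<Rightarrow> real"
  assumes M: "prob_space M"
    and X_L2: "\<forall>\<omega>\<in>space M. sq_int (X \<omega>)"
    and X_meas: "\<forall>\<beta>. sq_int \<beta> \<longrightarrow> (\<lambda>\<omega>. ip (X \<omega>) \<beta>) \<in> borel_measurable M"
    and y_meas: "y \<in> borel_measurable M"
    and y_01: "\<forall>\<omega>\<in>space M. y \<omega> \<in> {0, 1}"
    and beta0: "sq_int \<beta>0"
    and model: "\<forall>A\<in>sets (sigmaX M X).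
        (\<integral>\<omega>. indicator A \<omega> * y \<omega> \<partial>M) = (\<integral>\<omega>. indicator A \<omega> * logF (\<alpha>0 + ip (X \<omega>) \<beta>0) \<partial>M)"
    and w_nonneg: "\<forall>f. 0 \<le> w f"
    and w_bdd: "bounded (range w)"
    and w_meas: "(\<lambda>\<omega>. w (X \<omega>)) \<in> borel_measurable (sigmaX M X)"
    and A1_deriv: "\<forall>t\<ge>0. (\<rho> has_real_derivative \<psi> t) (at t within {0..})"
    and A1_cont: "continuous_on {0..} \<psi>"
    and A1_bdd: "bounded (\<rho> ` {0..})"
    and A1_bdd': "bounded (\<psi> ` {0..})"
    and A1_zero: "\<rho> 0 = 0"
    and A3_nonneg: "\<forall>t\<ge>0. 0 \<le> \<psi> t"
    and A3: "\<exists>a A0. a \<ge> ln 2 \<and> A0 > 0 \<and> (\<forall>t. 0 < t \<and> t < a \<longrightarrow> \<psi> t > A0)"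
  shows "\<exists>C0>0. \<forall>\<alpha> \<beta>. sq_int \<beta> \<longrightarrow>
           Lobj \<rho> \<psi> M w X y \<alpha> \<beta> - Lobj \<rho> \<psi> M w X y \<alpha>0 \<beta>0
             \<ge> C0 * piP2 M w X \<alpha> \<beta> \<alpha>0 \<beta>0"
proof -
  interpret prob_space M by (rule M)
  have fin: "finite_measure M" by unfold_locales
  obtain a A0 where a: "a \<ge> ln 2" and A0: "A0 > 0" and A: "\<forall>t. 0 < t \<and> t < a \<longrightarrow> \<psi> t > A0"
    using A3 by blast
  obtain B where B: "\<forall>x\<in>\<psi> ` {0..}. norm x \<le> B" using A1_bdd' unfolding bounded_iff by blast
  then have bd: "\<forall>t\<ge>0. \<psi> t \<le> B" by force
  obtain R where R: "\<forall>x\<in>\<rho> ` {0..}. norm x \<le> R" using A1_bdd unfolding bounded_iff by blast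
  then have rb: "\<forall>x\<ge>0. \<bar>\<rho> x\<bar> \<le> R" by force
  obtain Bw where Bw: "\<forall>x\<in>range w. norm x \<le> Bw" using w_bdd unfolding bounded_iff by blast
  then have wb: "\<forall>f. w f \<le> Bw" by (metis abs_le_D1 rangeI real_norm_def)
  define K where "K = R + 2 * B"
  have phib: "\<bar>phi \<rho> \<psi> yv t\<bar> \<le> K" if "yv = 0 \<or> yv = 1" for yv t
    unfolding K_def by (rule phi_bound[OF A1_cont A3_nonneg bd rb that])
  have phim1[measurable]: "phi \<rho> \<psi> 1 \<in> borel_measurable borel"
    by (rule phi_cont[OF A1_deriv A1_cont A3_nonneg bd]) simp
  have phim0[measurable]: "phi \<rho> \<psi> 0 \<in> borel_measurable borel"
    by (rule phi_cont[OF A1_deriv A1_cont A3_nonneg bd]) simp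
  note logF_meas[measurable]
  define Gen where "Gen = (\<Union>\<beta>\<in>{\<beta>. sq_int \<beta>}. {(\<lambda>\<omega>. ip (X \<omega>) \<beta>) -` S \<inter> space M | S. S \<in> sets borel})"
  define F where "F = sigmaX M X"
  have F_eq: "F = sigma (space M) Gen" unfolding F_def sigmaX_def Gen_def ..
  have GenM: "Gen \<subseteq> sets M" unfolding Gen_def using X_meas by (auto intro: measurable_sets)
  have GenP: "Gen \<subseteq> Pow (space M)" unfolding Gen_def by auto
  have spF: "space F = space M" unfolding F_eq using space_measure_of[OF GenP] by simp
  have setsF: "sets F = sigma_sets (space M) Gen" unfolding F_eq using sets_measure_of[OF GenP] .
  have subalg: "subalgebra M F" unfolding subalgebra_def using spF setsF sets.sigma_sets_subset[OF GenM] by simp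
  interpret sigma_finite_subalgebra M F
    by (rule finite_measure_subalgebra_is_sigma_finite) (unfold_locales, rule subalg)
  have ipF: "(\<lambda>\<omega>. ip (X \<omega>) \<beta>) \<in> borel_measurable F" if hb: "sq_int \<beta>" for \<beta>
  proof (rule measurableI)
    show "\<And>x. x \<in> space F \<Longrightarrow> ip (X x) \<beta> \<in> space borel" by simp
    fix S :: "real set" assume "S \<in> sets borel"
    then have "(\<lambda>\<omega>. ip (X \<omega>) \<beta>) -` S \<inter> space M \<in> Gen" unfolding Gen_def using hb by blast
    then show "(\<lambda>\<omega>. ip (X \<omega>) \<beta>) -` S \<inter> space F \<in> sets F" unfolding spF setsF by (rule sigma_sets.Basic)
  qed
  have WF[measurable]: "(\<lambda>\<omega>. w (X \<omega>)) \<in> borel_measurable F" using w_meas F_def by simp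
  have WM[measurable]: "(\<lambda>\<omega>. w (X \<omega>)) \<in> borel_measurable M" by (rule measurable_from_subalg[OF subalg WF])
  note y_meas[measurable]
  have ipF0[measurable]: "(\<lambda>\<omega>. ip (X \<omega>) \<beta>0) \<in> borel_measurable F" by (rule ipF[OF beta0])
  have ipM0[measurable]: "(\<lambda>\<omega>. ip (X \<omega>) \<beta>0) \<in> borel_measurable M" using X_meas beta0 by simp
  define p where "p = (\<lambda>\<omega>. logF (\<alpha>0 + ip (X \<omega>) \<beta>0))"
  have pF[measurable]: "p \<in> borel_measurable F" unfolding p_def by measurable
  have pM[measurable]: "p \<in> borel_measurable M" unfolding p_def by measurable
  have p01: "0 < p \<omega>" "p \<omega> < 1" for \<omega> unfolding p_def by (rule logF_01)+
  have yint: "integrable M y"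
    by (rule int_bdd[OF fin y_meas, of 1]) (use y_01 in auto)
  have pint: "integrable M p"
    by (rule int_bdd[OF fin pM, of 1]) (use p01 in \<open>auto simp: abs_le_iff less_imp_le\<close>)
  have ae: "AE \<omega> in M. real_cond_exp M F y \<omega> = p \<omega>"
  proof (rule real_cond_exp_charact[OF _ yint pint pF])
    fix A assume "A \<in> sets F"
    then have "A \<in> sets (sigmaX M X)" using F_def by simp
    then show "(\<integral>x\<in>A. y x \<partial>M) = (\<integral>x\<in>A. p x \<partial>M)"
      using model unfolding set_lebesgue_integral_def p_def by simp
  qed
  show ?thesis
  proof (intro exI[of _ "A0/2"] conjI allI impI)
    show "0 < A0/2" using A0 by simp
    fix \<alpha> \<beta> assume hb: "sq_int (\<beta> :: real \<Rightarrow> real)"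
    have ipF1[measurable]: "(\<lambda>\<omega>. ip (X \<omega>) \<beta>) \<in> borel_measurable F" by (rule ipF[OF hb])
    have ipM1[measurable]: "(\<lambda>\<omega>. ip (X \<omega>) \<beta>) \<in> borel_measurable M" using X_meas hb by simp
    define q where "q = (\<lambda>\<omega>. logF (\<alpha> + ip (X \<omega>) \<beta>))"
    have q01: "0 < q \<omega>" "q \<omega> < 1" for \<omega> unfolding q_def by (rule logF_01)+
    define W where "W = (\<lambda>\<omega>. w (X \<omega>))"
    have WF'[measurable]: "W \<in> borel_measurable F" unfolding W_def by measurable
    have WM'[measurable]: "W \<in> borel_measurable M" unfolding W_def by measurable
    have W0: "0 \<le> W \<omega>" "W \<omega> \<le> Bw" for \<omega> unfolding W_def using w_nonneg wb by auto
    have Wa: "\<bar>W \<omega>\<bar> \<le> Bw" for \<omega> using W0[of \<omega>] by simp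
    define U1 where "U1 = (\<lambda>\<omega>. phi \<rho> \<psi> 1 (\<alpha> + ip (X \<omega>) \<beta>))"
    define U0 where "U0 = (\<lambda>\<omega>. phi \<rho> \<psi> 0 (\<alpha> + ip (X \<omega>) \<beta>))"
    define V1 where "V1 = (\<lambda>\<omega>. phi \<rho> \<psi> 1 (\<alpha>0 + ip (X \<omega>) \<beta>0))"
    define V0 where "V0 = (\<lambda>\<omega>. phi \<rho> \<psi> 0 (\<alpha>0 + ip (X \<omega>) \<beta>0))"
    have UF[measurable]: "U1 \<in> borel_measurable F" "U0 \<in> borel_measurable F" "V1 \<in> borel_measurable F" "V0 \<in> borel_measurable F"
      unfolding U1_def U0_def V1_def V0_def by measurable
    have UM[measurable]: "U1 \<in> borel_measurable M" "U0 \<in> borel_measurable M" "V1 \<in> borel_measurable M" "V0 \<in> borel_measurable M"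
      unfolding U1_def U0_def V1_def V0_def by measurable
    have Ub: "\<bar>U1 \<omega>\<bar> \<le> K" "\<bar>U0 \<omega>\<bar> \<le> K" "\<bar>V1 \<omega>\<bar> \<le> K" "\<bar>V0 \<omega>\<bar> \<le> K" for \<omega>
      unfolding U1_def U0_def V1_def V0_def using phib by auto
    define Phi1 where "Phi1 = (\<lambda>\<omega>. (y \<omega> * U1 \<omega> + (1 - y \<omega>) * U0 \<omega>) * W \<omega>)"
    define Phi0 where "Phi0 = (\<lambda>\<omega>. (y \<omega> * V1 \<omega> + (1 - y \<omega>) * V0 \<omega>) * W \<omega>)"
    have L1: "Lobj \<rho> \<psi> M w X y \<alpha> \<beta> = integral\<^sup>L M Phi1"
      unfolding Lobj_def Phi1_def
    proof (rule Bochner_Integration.integral_cong[OF refl])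
      fix \<omega> assume "\<omega> \<in> space M"
      then have "y \<omega> = 0 \<or> y \<omega> = 1" using y_01 by auto
      then show "phi \<rho> \<psi> (y \<omega>) (\<alpha> + ip (X \<omega>) \<beta>) * w (X \<omega>) = (y \<omega> * U1 \<omega> + (1 - y \<omega>) * U0 \<omega>) * W \<omega>"
        unfolding U1_def U0_def W_def by auto
    qed
    have L0: "Lobj \<rho> \<psi> M w X y \<alpha>0 \<beta>0 = integral\<^sup>L M Phi0"
      unfolding Lobj_def Phi0_def
    proof (rule Bochner_Integration.integral_cong[OF refl])
      fix \<omega> assume "\<omega> \<in> space M"
      then have "y \<omega> = 0 \<or> y \<omega> = 1" using y_01 by auto
      then show "phi \<rho> \<psi> (y \<omega>) (\<alpha>0 + ip (X \<omega>) \<beta>0) * w (X \<omega>) = (y \<omega> * V1 \<omega> + (1 - y \<omega>) * V0 \<omega>) * W \<omega>"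
        unfolding V1_def V0_def W_def by auto
    qed
    have yab: "\<bar>y \<omega>\<bar> \<le> 1" "\<bar>1 - y \<omega>\<bar> \<le> 1" if "\<omega> \<in> space M" for \<omega> using y_01 that by auto
    have pab: "\<bar>p \<omega>\<bar> \<le> 1" "\<bar>1 - p \<omega>\<bar> \<le> 1" for \<omega> using p01[of \<omega>] by auto
    have qpb: "\<bar>q \<omega> - p \<omega>\<bar> \<le> 1" for \<omega> using p01[of \<omega>] q01[of \<omega>] by auto
    have I1: "integrable M Phi1"
    proof (rule int_bdd[OF fin, of _ "(K + K) * Bw"])
      show "Phi1 \<in> borel_measurable M" unfolding Phi1_def by measurable
      fix \<omega> assume o: "\<omega> \<in> space M"
      have "\<bar>y \<omega> * U1 \<omega>\<bar> \<le> 1 * K" by (rule abs_prod_le[OF yab(1)[OF o] Ub(1)])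
      moreover have "\<bar>(1 - y \<omega>) * U0 \<omega>\<bar> \<le> 1 * K" by (rule abs_prod_le[OF yab(2)[OF o] Ub(2)])
      ultimately have "\<bar>y \<omega> * U1 \<omega> + (1 - y \<omega>) * U0 \<omega>\<bar> \<le> K + K" by simp
      then show "\<bar>Phi1 \<omega>\<bar> \<le> (K + K) * Bw" unfolding Phi1_def by (rule abs_prod_le[OF _ Wa])
    qed
    have I0: "integrable M Phi0"
    proof (rule int_bdd[OF fin, of _ "(K + K) * Bw"])
      show "Phi0 \<in> borel_measurable M" unfolding Phi0_def by measurable
      fix \<omega> assume o: "\<omega> \<in> space M"
      have "\<bar>y \<omega> * V1 \<omega>\<bar> \<le> 1 * K" by (rule abs_prod_le[OF yab(1)[OF o] Ub(3)])
      moreover have "\<bar>(1 - y \<omega>) * V0 \<omega>\<bar> \<le> 1 * K" by (rule abs_prod_le[OF yab(2)[OF o] Ub(4)])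
      ultimately have "\<bar>y \<omega> * V1 \<omega> + (1 - y \<omega>) * V0 \<omega>\<bar> \<le> K + K" by simp
      then show "\<bar>Phi0 \<omega>\<bar> \<le> (K + K) * Bw" unfolding Phi0_def by (rule abs_prod_le[OF _ Wa])
    qed
    define Z where "Z = (\<lambda>\<omega>. W \<omega> * (U1 \<omega> - U0 \<omega> - V1 \<omega> + V0 \<omega>))"
    have ZF[measurable]: "Z \<in> borel_measurable F" unfolding Z_def by measurable
    have ZM[measurable]: "Z \<in> borel_measurable M" unfolding Z_def by measurable
    have Zb: "\<bar>Z \<omega>\<bar> \<le> Bw * (K + K + K + K)" for \<omega>
    proof -
      have "\<bar>U1 \<omega> - U0 \<omega> - V1 \<omega> + V0 \<omega>\<bar> \<le> K + K + K + K" using Ub[of \<omega>] by linarith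
      then show ?thesis unfolding Z_def by (rule abs_prod_le[OF Wa])
    qed
    have I3: "integrable M (\<lambda>\<omega>. W \<omega> * (U0 \<omega> - V0 \<omega>))"
    proof (rule int_bdd[OF fin, of _ "Bw * (K + K)"])
      show "(\<lambda>\<omega>. W \<omega> * (U0 \<omega> - V0 \<omega>)) \<in> borel_measurable M" by measurable
      fix \<omega> have "\<bar>U0 \<omega> - V0 \<omega>\<bar> \<le> K + K" using Ub[of \<omega>] by linarith
      then show "\<bar>W \<omega> * (U0 \<omega> - V0 \<omega>)\<bar> \<le> Bw * (K + K)" by (rule abs_prod_le[OF Wa])
    qed
    have I4: "integrable M (\<lambda>\<omega>. Z \<omega> * y \<omega>)"
    proof (rule int_bdd[OF fin, of _ "Bw * (K + K + K + K) * 1"])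
      show "(\<lambda>\<omega>. Z \<omega> * y \<omega>) \<in> borel_measurable M" by measurable
      fix \<omega> assume o: "\<omega> \<in> space M"
      show "\<bar>Z \<omega> * y \<omega>\<bar> \<le> Bw * (K + K + K + K) * 1" by (rule abs_prod_le[OF Zb yab(1)[OF o]])
    qed
    have I5: "integrable M (\<lambda>\<omega>. Z \<omega> * p \<omega>)"
    proof (rule int_bdd[OF fin, of _ "Bw * (K + K + K + K) * 1"])
      show "(\<lambda>\<omega>. Z \<omega> * p \<omega>) \<in> borel_measurable M" by measurable
      fix \<omega>
      show "\<bar>Z \<omega> * p \<omega>\<bar> \<le> Bw * (K + K + K + K) * 1" by (rule abs_prod_le[OF Zb pab(1)])
    qed
    have I7: "integrable M (\<lambda>\<omega>. W \<omega> * (q \<omega> - p \<omega>)^2)"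
    proof (rule int_bdd[OF fin, of _ "Bw * 1"])
      show "(\<lambda>\<omega>. W \<omega> * (q \<omega> - p \<omega>)^2) \<in> borel_measurable M" unfolding q_def by measurable
      fix \<omega>
      have "\<bar>(q \<omega> - p \<omega>)^2\<bar> \<le> 1" using qpb[of \<omega>]
        by (simp add: abs_square_le_1)
      then show "\<bar>W \<omega> * (q \<omega> - p \<omega>)^2\<bar> \<le> Bw * 1" by (rule abs_prod_le[OF Wa])
    qed
    have ZY: "(\<integral>\<omega>. Z \<omega> * y \<omega> \<partial>M) = (\<integral>\<omega>. Z \<omega> * p \<omega> \<partial>M)"
    proof -
      have "(\<integral>\<omega>. Z \<omega> * y \<omega> \<partial>M) = (\<integral>\<omega>. Z \<omega> * real_cond_exp M F y \<omega> \<partial>M)"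
        by (rule real_cond_exp_intg(2)[OF I4 ZF y_meas, symmetric])
      also have "\<dots> = (\<integral>\<omega>. Z \<omega> * p \<omega> \<partial>M)"
      proof (rule integral_cong_AE)
        show "(\<lambda>\<omega>. Z \<omega> * real_cond_exp M F y \<omega>) \<in> borel_measurable M" by measurable
        show "(\<lambda>\<omega>. Z \<omega> * p \<omega>) \<in> borel_measurable M" by measurable
        show "AE \<omega> in M. Z \<omega> * real_cond_exp M F y \<omega> = Z \<omega> * p \<omega>"
          using ae by eventually_elim simp
      qed
      finally show ?thesis .
    qed
    have "Lobj \<rho> \<psi> M w X y \<alpha> \<beta> - Lobj \<rho> \<psi> M w X y \<alpha>0 \<beta>0 = (\<integral>\<omega>. Phi1 \<omega> - Phi0 \<omega> \<partial>M)"
      unfolding L1 L0 using I1 I0 by simp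
    also have "\<dots> = (\<integral>\<omega>. W \<omega> * (U0 \<omega> - V0 \<omega>) + Z \<omega> * y \<omega> \<partial>M)"
      by (rule Bochner_Integration.integral_cong[OF refl]) (simp add: Phi1_def Phi0_def Z_def algebra_simps)
    also have "\<dots> = (\<integral>\<omega>. W \<omega> * (U0 \<omega> - V0 \<omega>) \<partial>M) + (\<integral>\<omega>. Z \<omega> * y \<omega> \<partial>M)"
      using I3 I4 by simp
    also have "\<dots> = (\<integral>\<omega>. W \<omega> * (U0 \<omega> - V0 \<omega>) \<partial>M) + (\<integral>\<omega>. Z \<omega> * p \<omega> \<partial>M)"
      by (simp only: ZY)
    also have "\<dots> = (\<integral>\<omega>. W \<omega> * (U0 \<omega> - V0 \<omega>) + Z \<omega> * p \<omega> \<partial>M)"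
      using I3 I5 by simp
    finally have diff: "Lobj \<rho> \<psi> M w X y \<alpha> \<beta> - Lobj \<rho> \<psi> M w X y \<alpha>0 \<beta>0 = (\<integral>\<omega>. W \<omega> * (U0 \<omega> - V0 \<omega>) + Z \<omega> * p \<omega> \<partial>M)" .
    have pt: "A0/2 * (W \<omega> * (q \<omega> - p \<omega>)^2) \<le> W \<omega> * (U0 \<omega> - V0 \<omega>) + Z \<omega> * p \<omega>" for \<omega>
    proof -
      have P: "A0/2 * (q \<omega> - p \<omega>)^2 \<le> (p \<omega> * \<rho> (- ln (q \<omega>)) + (1 - p \<omega>) * \<rho> (- ln (1 - q \<omega>)) + Gfun \<psi> (q \<omega>) + Gfun \<psi> (1 - q \<omega>))
           - (p \<omega> * \<rho> (- ln (p \<omega>)) + (1 - p \<omega>) * \<rho> (- ln (1 - p \<omega>)) + Gfun \<psi> (p \<omega>) + Gfun \<psi> (1 - p \<omega>))"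
        by (rule pointwise[OF A1_deriv A1_cont A3_nonneg bd a A A0 p01 q01])
      have e: "W \<omega> * (U0 \<omega> - V0 \<omega>) + Z \<omega> * p \<omega> = W \<omega> * ((p \<omega> * \<rho> (- ln (q \<omega>)) + (1 - p \<omega>) * \<rho> (- ln (1 - q \<omega>)) + Gfun \<psi> (q \<omega>) + Gfun \<psi> (1 - q \<omega>))
           - (p \<omega> * \<rho> (- ln (p \<omega>)) + (1 - p \<omega>) * \<rho> (- ln (1 - p \<omega>)) + Gfun \<psi> (p \<omega>) + Gfun \<psi> (1 - p \<omega>)))"
        unfolding Z_def U1_def U0_def V1_def V0_def phi_def dev1 dev0 p_def q_def by (simp add: algebra_simps)
      have "A0/2 * (W \<omega> * (q \<omega> - p \<omega>)^2) = W \<omega> * (A0/2 * (q \<omega> - p \<omega>)^2)" by simp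
      also have "\<dots> \<le> W \<omega> * ((p \<omega> * \<rho> (- ln (q \<omega>)) + (1 - p \<omega>) * \<rho> (- ln (1 - q \<omega>)) + Gfun \<psi> (q \<omega>) + Gfun \<psi> (1 - q \<omega>))
           - (p \<omega> * \<rho> (- ln (p \<omega>)) + (1 - p \<omega>) * \<rho> (- ln (1 - p \<omega>)) + Gfun \<psi> (p \<omega>) + Gfun \<psi> (1 - p \<omega>)))"
        by (rule mult_left_mono[OF P W0(1)])
      finally show ?thesis unfolding e .
    qed
    have "A0/2 * piP2 M w X \<alpha> \<beta> \<alpha>0 \<beta>0 = (\<integral>\<omega>. A0/2 * (W \<omega> * (q \<omega> - p \<omega>)^2) \<partial>M)"
      unfolding piP2_def W_def q_def p_def by simp
    also have "\<dots> \<le> (\<integral>\<omega>. W \<omega> * (U0 \<omega> - V0 \<omega>) + Z \<omega> * p \<omega> \<partial>M)"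
      by (rule integral_mono[OF _ _ pt]) (use I7 I3 I5 in simp_all)
    finally show "Lobj \<rho> \<psi> M w X y \<alpha> \<beta> - Lobj \<rho> \<psi> M w X y \<alpha>0 \<beta>0 \<ge> A0/2 * piP2 M w X \<alpha> \<beta> \<alpha>0 \<beta>0"
      unfolding diff .
  qed
qed


end
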